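(* Let $\mathcal{A}$ be a topological ring, let $\mathcal{B}$ be a separated topological ring with separated completion $c\colon\mathcal{B}\to\widehat{\mathcal{B}}$, and let $h_n\colon\mathcal{A}\to\mathcal{B}$, $n\in\mathbb{N}$, be a sequence of group homomorphisms which converges pointwise to the zero homomorphism. Then the map $s\colon\mathcal{A}\to\widehat{\mathcal{B}}\{T\}$, $a\mapsto\sum_{n\in\mathbb{N}}c(h_n(a))T^n$, is a well-defined group homomorphism, and the following are equivalent: (a) $s$ is continuous; (b) every $h_n$ is continuous and the sequence $(h_n)_n$ converges continuously to the zero homomorphism.
   Context: Topological rings are linearly topologized with a countable fundamental system of open ideals; separated means Hausdorff; the separated completion is $\widehat{\mathcal{B}}=\varprojlim_{\mathfrak{b}}\mathcal{B}/\mathfrak{b}$ over open ideals (quotients discrete) with the inverse limit topology and canonical map $c$. For the complete ring $\widehat{\mathcal{B}}$, $\widehat{\mathcal{B}}\{T\}$ is the ring of restricted power series $\sum b_nT^n$ with $b_n\to0$ in $\widehat{\mathcal{B}}$, topologized by the ideals of series with all coefficients in a given open ideal. $(h_n)$ converges pointwise to $0$ if for every $a$ and open ideal $\mathfrak{b}$ there is $n_0$ with $h_n(a)\in\mathfrak{b}$ for $n\ge n_0$; it converges continuously to $0$ if every $h_n$ is continuous and for every $a$ and open ideal $\mathfrak{b}'$ of $\mathcal{B}$ there exist an open ideal $\mathfrak{a}$ of $\mathcal{A}$ and $n_0$ with $h_n(a+x)\in\mathfrak{b}'$ for all $x\in\mathfrak{a}$, $n\ge n_0$. *)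

theory Defs
  imports "HOL-Analysis.Analysis"
begin

definition is_ideal :: "'a::comm_ring_1 set \<Rightarrow> bool" where
  "is_ideal J \<longleftrightarrow> 0 \<in> J \<and> (\<forall>x\<in>J. \<forall>y\<in>J. x + y \<in> J) \<and> (\<forall>x\<in>J. - x \<in> J)
     \<and> (\<forall>r x. x \<in> J \<longrightarrow> r * x \<in> J)"

definition fund_system :: "(nat \<Rightarrow> 'a::comm_ring_1 set) \<Rightarrow> bool" where
  "fund_system I \<longleftrightarrow> (\<forall>k. is_ideal (I k)) \<and> (\<forall>i j. \<exists>k. I k \<subseteq> I i \<inter> I j)"

definition lin_top :: "(nat \<Rightarrow> 'a::comm_ring_1 set) \<Rightarrow> 'a topology" where
  "lin_top I = topology (\<lambda>U. \<forall>x\<in>U. \<exists>k. (\<lambda>y. x + y) ` I k \<subseteq> U)"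

definition open_ideal :: "(nat \<Rightarrow> 'a::comm_ring_1 set) \<Rightarrow> 'a set \<Rightarrow> bool" where
  "open_ideal I J \<longleftrightarrow> is_ideal J \<and> (\<exists>k. I k \<subseteq> J)"

section \<open>Separated completion as inverse limit of discrete quotients B/b over open ideals b\<close>

text \<open>An element is a compatible family of cosets, indexed by the open ideals
  (extended by the empty set at non-open-ideals, for extensionality).\<close>
definition hat_carrier :: "(nat \<Rightarrow> 'b::comm_ring_1 set) \<Rightarrow> ('b set \<Rightarrow> 'b set) set" where
  "hat_carrier I = {\<xi>. (\<forall>b. open_ideal I b \<longrightarrow> (\<exists>x. \<xi> b = (\<lambda>y. x + y) ` b))
     \<and> (\<forall>b. \<not> open_ideal I b \<longrightarrow> \<xi> b = {})
     \<and> (\<forall>b b'. open_ideal I b \<and> open_ideal I b' \<and> b \<subseteq> b' \<longrightarrow> \<xi> b \<subseteq> \<xi> b')}"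

definition cmap :: "(nat \<Rightarrow> 'b::comm_ring_1 set) \<Rightarrow> 'b \<Rightarrow> ('b set \<Rightarrow> 'b set)" where
  "cmap I x = (\<lambda>b. if open_ideal I b then (\<lambda>y. x + y) ` b else {})"

definition hat_op :: "(nat \<Rightarrow> 'b::comm_ring_1 set) \<Rightarrow> ('b \<Rightarrow> 'b \<Rightarrow> 'b)
    \<Rightarrow> ('b set \<Rightarrow> 'b set) \<Rightarrow> ('b set \<Rightarrow> 'b set) \<Rightarrow> ('b set \<Rightarrow> 'b set)" where
  "hat_op I f \<xi> \<eta> = (\<lambda>b. if open_ideal I b
      then {z. \<exists>x\<in>\<xi> b. \<exists>y\<in>\<eta> b. z - f x y \<in> b} else {})"

definition hat_zero :: "(nat \<Rightarrow> 'b::comm_ring_1 set) \<Rightarrow> ('b set \<Rightarrow> 'b set)" where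
  "hat_zero I = cmap I 0"

definition hat_top :: "(nat \<Rightarrow> 'b::comm_ring_1 set) \<Rightarrow> ('b set \<Rightarrow> 'b set) topology" where
  "hat_top I = topology (\<lambda>U. U \<subseteq> hat_carrier I \<and>
     (\<forall>\<xi>\<in>U. \<exists>b. open_ideal I b \<and> {\<eta> \<in> hat_carrier I. \<eta> b = \<xi> b} \<subseteq> U))"

definition hat_ideal :: "(nat \<Rightarrow> 'b::comm_ring_1 set) \<Rightarrow> ('b set \<Rightarrow> 'b set) set \<Rightarrow> bool" where
  "hat_ideal I J \<longleftrightarrow> J \<subseteq> hat_carrier I \<and> hat_zero I \<in> J
     \<and> (\<forall>\<xi>\<in>J. \<forall>\<eta>\<in>J. hat_op I (+) \<xi> \<eta> \<in> J \<and> hat_op I (-) \<xi> \<eta> \<in> J)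
     \<and> (\<forall>\<rho>\<in>hat_carrier I. \<forall>\<xi>\<in>J. hat_op I (*) \<rho> \<xi> \<in> J)"

definition hat_open_ideal :: "(nat \<Rightarrow> 'b::comm_ring_1 set) \<Rightarrow> ('b set \<Rightarrow> 'b set) set \<Rightarrow> bool" where
  "hat_open_ideal I J \<longleftrightarrow> hat_ideal I J \<and> openin (hat_top I) J"

section \<open>Restricted power series over the completion (coefficient sequences)\<close>

definition rps_carrier :: "(nat \<Rightarrow> 'b::comm_ring_1 set) \<Rightarrow> (nat \<Rightarrow> ('b set \<Rightarrow> 'b set)) set" where
  "rps_carrier I = {\<sigma>. (\<forall>n. \<sigma> n \<in> hat_carrier I)
      \<and> limitin (hat_top I) \<sigma> (hat_zero I) sequentially}"

definition rps_top :: "(nat \<Rightarrow> 'b::comm_ring_1 set) \<Rightarrow> (nat \<Rightarrow> ('b set \<Rightarrow> 'b set)) topology" where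
  "rps_top I = topology (\<lambda>U. U \<subseteq> rps_carrier I \<and>
     (\<forall>\<sigma>\<in>U. \<exists>J. hat_open_ideal I J \<and>
        {\<tau> \<in> rps_carrier I. \<forall>n. hat_op I (-) (\<tau> n) (\<sigma> n) \<in> J} \<subseteq> U))"

definition rps_add :: "(nat \<Rightarrow> 'b::comm_ring_1 set) \<Rightarrow> (nat \<Rightarrow> ('b set \<Rightarrow> 'b set))
    \<Rightarrow> (nat \<Rightarrow> ('b set \<Rightarrow> 'b set)) \<Rightarrow> (nat \<Rightarrow> ('b set \<Rightarrow> 'b set))" where
  "rps_add I \<sigma> \<tau> = (\<lambda>n. hat_op I (+) (\<sigma> n) (\<tau> n))"

definition conv_pointwise_zero :: "(nat \<Rightarrow> 'b::comm_ring_1 set) \<Rightarrow> (nat \<Rightarrow> 'a \<Rightarrow> 'b) \<Rightarrow> bool" where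
  "conv_pointwise_zero IB h \<longleftrightarrow>
     (\<forall>a b. open_ideal IB b \<longrightarrow> (\<exists>n0. \<forall>n\<ge>n0. h n a \<in> b))"

definition conv_continuously_zero :: "(nat \<Rightarrow> 'a::comm_ring_1 set) \<Rightarrow> (nat \<Rightarrow> 'b::comm_ring_1 set)
    \<Rightarrow> (nat \<Rightarrow> 'a \<Rightarrow> 'b) \<Rightarrow> bool" where
  "conv_continuously_zero IA IB h \<longleftrightarrow>
     (\<forall>n. continuous_map (lin_top IA) (lin_top IB) (h n)) \<and>
     (\<forall>a b'. open_ideal IB b' \<longrightarrow>
        (\<exists>\<aa> n0. open_ideal IA \<aa> \<and> (\<forall>x\<in>\<aa>. \<forall>n\<ge>n0. h n (a + x) \<in> b')))"

end

theory Submission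
  imports Defs
begin


lemma ideal_props:
  assumes "is_ideal J"
  shows "0 \<in> J" "x \<in> J \<Longrightarrow> y \<in> J \<Longrightarrow> x + y \<in> J" "x \<in> J \<Longrightarrow> - x \<in> J"
    "x \<in> J \<Longrightarrow> r * x \<in> J" "x \<in> J \<Longrightarrow> y \<in> J \<Longrightarrow> x - y \<in> J" "x \<in> J \<Longrightarrow> x * r \<in> J"
  using assms unfolding is_ideal_def
  by (auto simp: mult.commute) (metis diff_conv_add_uminus)

lemma coset_eq_iff:
  assumes "is_ideal J"
  shows "((\<lambda>y. x + y) ` J = (\<lambda>y. z + y) ` J) \<longleftrightarrow> x - z \<in> J"
proof
  assume h: "(\<lambda>y. x + y) ` J = (\<lambda>y. z + y) ` J"
  have "x \<in> (\<lambda>y. x + y) ` J" using ideal_props(1)[OF assms] by force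
  then obtain u where "u \<in> J" "x = z + u" using h by auto
  then show "x - z \<in> J" by simp
next
  assume h: "x - z \<in> J"
  show "(\<lambda>y. x + y) ` J = (\<lambda>y. z + y) ` J"
  proof (rule set_eqI, rule iffI)
    fix w assume "w \<in> (\<lambda>y. x + y) ` J"
    then obtain u where u: "u \<in> J" "w = x + u" by auto
    then have "(x - z) + u \<in> J" using ideal_props(2)[OF assms h] by auto
    moreover have "w = z + ((x - z) + u)" using u by simp
    ultimately show "w \<in> (\<lambda>y. z + y) ` J" by blast
  next
    fix w assume "w \<in> (\<lambda>y. z + y) ` J"
    then obtain u where u: "u \<in> J" "w = z + u" by auto
    then have "u - (x - z) \<in> J" using ideal_props(5)[OF assms _ h] by auto
    moreover have "w = x + (u - (x - z))" using u by simp
    ultimately show "w \<in> (\<lambda>y. x + y) ` J" by blast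
  qed
qed

lemma coset_eq_self_iff:
  assumes "is_ideal J"
  shows "((\<lambda>y. x + y) ` J = J) \<longleftrightarrow> x \<in> J"
  using coset_eq_iff[OF assms, of x 0] by simp

lemma coset_mem:
  assumes "is_ideal J" shows "w \<in> (\<lambda>y. x + y) ` J \<longleftrightarrow> w - x \<in> J"
  by (auto simp: image_iff) (metis add_diff_cancel_left' diff_add_cancel add.commute)

lemma fund_open_ideal: "fund_system I \<Longrightarrow> open_ideal I (I k)"
  unfolding fund_system_def open_ideal_def by auto

lemma open_ideal_UNIV: "open_ideal I UNIV"
  unfolding open_ideal_def is_ideal_def by auto

lemma open_ideal_Int:
  assumes "fund_system I" "open_ideal I b1" "open_ideal I b2"
  shows "open_ideal I (b1 \<inter> b2)"
proof -
  obtain k1 k2 where "I k1 \<subseteq> b1" "I k2 \<subseteq> b2" using assms(2,3) unfolding open_ideal_def by auto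
  moreover obtain k where "I k \<subseteq> I k1 \<inter> I k2" using assms(1) unfolding fund_system_def by blast
  moreover have "is_ideal (b1 \<inter> b2)" using assms(2,3) unfolding open_ideal_def is_ideal_def by auto
  ultimately show ?thesis unfolding open_ideal_def by blast
qed

lemma istop_lin: "fund_system I \<Longrightarrow> istopology (\<lambda>U. \<forall>x\<in>U. \<exists>k. (\<lambda>y. x + y) ` I k \<subseteq> U)"
  unfolding istopology_def
proof (intro conjI allI impI)
  fix S T assume f: "fund_system I" and S: "\<forall>x\<in>S. \<exists>k. (\<lambda>y. x + y) ` I k \<subseteq> S"
    and T: "\<forall>x\<in>T. \<exists>k. (\<lambda>y. x + y) ` I k \<subseteq> T"
  show "\<forall>x\<in>S \<inter> T. \<exists>k. (\<lambda>y. x + y) ` I k \<subseteq> S \<inter> T"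
  proof
    fix x assume "x \<in> S \<inter> T"
    then obtain k1 k2 where "(\<lambda>y. x + y) ` I k1 \<subseteq> S" "(\<lambda>y. x + y) ` I k2 \<subseteq> T" using S T by blast
    moreover obtain k where "I k \<subseteq> I k1 \<inter> I k2" using f unfolding fund_system_def by blast
    ultimately show "\<exists>k. (\<lambda>y. x + y) ` I k \<subseteq> S \<inter> T" by blast
  qed
next
  fix K :: "'a set set" assume H: "\<forall>U\<in>K. \<forall>x\<in>U. \<exists>k. (\<lambda>y. x + y) ` I k \<subseteq> U"
  show "\<forall>x\<in>\<Union>K. \<exists>k. (\<lambda>y. x + y) ` I k \<subseteq> \<Union>K"
  proof
    fix x assume "x \<in> \<Union>K"
    then obtain U where U: "U \<in> K" "x \<in> U" by blast
    then obtain k where "(\<lambda>y. x + y) ` I k \<subseteq> U" using H by blast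
    then show "\<exists>k. (\<lambda>y. x + y) ` I k \<subseteq> \<Union>K" using U(1) by blast
  qed
qed

lemma openin_lin: "fund_system I \<Longrightarrow> openin (lin_top I) U \<longleftrightarrow> (\<forall>x\<in>U. \<exists>k. (\<lambda>y. x + y) ` I k \<subseteq> U)"
  unfolding lin_top_def by (simp only: topology_inverse'[OF istop_lin])

lemma topspace_lin: "fund_system I \<Longrightarrow> topspace (lin_top I) = UNIV"
  by (metis openin_lin openin_subset subset_UNIV top.extremum_uniqueI)

lemma fund_finite:
  assumes "fund_system I" shows "(\<forall>n<(N::nat). \<exists>k. I k \<subseteq> P n) \<Longrightarrow> \<exists>k. \<forall>n<N. I k \<subseteq> P n"
proof (induction N)
  case 0 then show ?case by auto
next
  case (Suc N)
  then obtain k1 where k1: "\<forall>n<N. I k1 \<subseteq> P n" by auto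
  obtain k2 where k2: "I k2 \<subseteq> P N" using Suc.prems by auto
  obtain k where "I k \<subseteq> I k1 \<inter> I k2" using assms unfolding fund_system_def by blast
  then show ?case using k1 k2 less_Suc_eq by blast
qed



lemma hc_ex: "\<xi> \<in> hat_carrier I \<Longrightarrow> open_ideal I b \<Longrightarrow> \<exists>x. \<xi> b = (\<lambda>y. x + y) ` b"
  unfolding hat_carrier_def by blast

lemma hc_mono: "\<xi> \<in> hat_carrier I \<Longrightarrow> open_ideal I b \<Longrightarrow> open_ideal I b' \<Longrightarrow> b \<subseteq> b' \<Longrightarrow> \<xi> b \<subseteq> \<xi> b'"
  unfolding hat_carrier_def by blast

lemma hc_off: "\<xi> \<in> hat_carrier I \<Longrightarrow> \<not> open_ideal I b \<Longrightarrow> \<xi> b = {}"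
  unfolding hat_carrier_def by blast

lemma self_in_coset: "is_ideal b \<Longrightarrow> x \<in> (\<lambda>y. x + y) ` b"
  using ideal_props(1) by force

lemma hc_coset:
  assumes "\<xi> \<in> hat_carrier I" "open_ideal I b" "x \<in> \<xi> b"
  shows "\<xi> b = (\<lambda>y. x + y) ` b"
proof -
  obtain x0 where x0: "\<xi> b = (\<lambda>y. x0 + y) ` b" using hc_ex[OF assms(1,2)] by blast
  have i: "is_ideal b" using assms(2) unfolding open_ideal_def by simp
  have "x - x0 \<in> b" using assms(3) x0 coset_mem[OF i] by simp
  then show ?thesis using x0 coset_eq_iff[OF i, of x x0] by simp
qed

lemma hc_mono_eq:
  assumes "\<xi> \<in> hat_carrier I" "\<eta> \<in> hat_carrier I" "open_ideal I b" "open_ideal I b'" "b \<subseteq> b'"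
    "\<xi> b = \<eta> b"
  shows "\<xi> b' = \<eta> b'"
proof -
  obtain x where x: "\<xi> b = (\<lambda>y. x + y) ` b" using hc_ex[OF assms(1,3)] by blast
  have i: "is_ideal b" using assms(3) unfolding open_ideal_def by simp
  have "x \<in> \<xi> b" using x self_in_coset[OF i] by simp
  then have "x \<in> \<xi> b'" "x \<in> \<eta> b'" using hc_mono assms by (metis subsetD)+
  then show ?thesis using hc_coset assms by metis
qed

lemma cmap_in: "cmap I x \<in> hat_carrier I"
  unfolding hat_carrier_def cmap_def by auto

lemma cmap_app: "open_ideal I b \<Longrightarrow> cmap I x b = (\<lambda>y. x + y) ` b"
  unfolding cmap_def by simp

lemma hat_zero_app: "open_ideal I b \<Longrightarrow> hat_zero I b = b"
  unfolding hat_zero_def cmap_def by simp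

lemma hat_zero_in: "hat_zero I \<in> hat_carrier I"
  unfolding hat_zero_def by (rule cmap_in)

definition hatP :: "(nat \<Rightarrow> 'b::comm_ring_1 set) \<Rightarrow> ('b set \<Rightarrow> 'b set) set \<Rightarrow> bool" where
  "hatP I = (\<lambda>U. U \<subseteq> hat_carrier I \<and>
     (\<forall>\<xi>\<in>U. \<exists>b. open_ideal I b \<and> {\<eta> \<in> hat_carrier I. \<eta> b = \<xi> b} \<subseteq> U))"

lemma istop_hat:
  assumes f: "fund_system I" shows "istopology (hatP I)"
  unfolding istopology_def
proof (intro conjI allI impI)
  fix S T assume S: "hatP I S" and T: "hatP I T"
  show "hatP I (S \<inter> T)" unfolding hatP_def
  proof (intro conjI ballI)
    show "S \<inter> T \<subseteq> hat_carrier I" using S unfolding hatP_def by auto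
    fix \<xi> assume x: "\<xi> \<in> S \<inter> T"
    obtain b1 where b1: "open_ideal I b1" "{\<eta> \<in> hat_carrier I. \<eta> b1 = \<xi> b1} \<subseteq> S"
      using S x unfolding hatP_def by blast
    obtain b2 where b2: "open_ideal I b2" "{\<eta> \<in> hat_carrier I. \<eta> b2 = \<xi> b2} \<subseteq> T"
      using T x unfolding hatP_def by blast
    have b: "open_ideal I (b1 \<inter> b2)" using open_ideal_Int[OF f b1(1) b2(1)] .
    have xc: "\<xi> \<in> hat_carrier I" using x S unfolding hatP_def by auto
    have "{\<eta> \<in> hat_carrier I. \<eta> (b1 \<inter> b2) = \<xi> (b1 \<inter> b2)} \<subseteq> S \<inter> T"
    proof
      fix \<eta> assume e: "\<eta> \<in> {\<eta> \<in> hat_carrier I. \<eta> (b1 \<inter> b2) = \<xi> (b1 \<inter> b2)}"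
      then have "\<eta> b1 = \<xi> b1" "\<eta> b2 = \<xi> b2"
        using hc_mono_eq[OF _ xc b b1(1)] hc_mono_eq[OF _ xc b b2(1)] by auto
      then show "\<eta> \<in> S \<inter> T" using e b1 b2 by auto
    qed
    then show "\<exists>b. open_ideal I b \<and> {\<eta> \<in> hat_carrier I. \<eta> b = \<xi> b} \<subseteq> S \<inter> T" using b by blast
  qed
next
  fix K assume H: "\<forall>U\<in>K. hatP I U"
  show "hatP I (\<Union>K)" unfolding hatP_def
  proof (intro conjI ballI)
    show "\<Union>K \<subseteq> hat_carrier I" using H unfolding hatP_def by blast
    fix \<xi> assume "\<xi> \<in> \<Union>K"
    then obtain U where U: "U \<in> K" "\<xi> \<in> U" by blast
    then obtain b where "open_ideal I b" "{\<eta> \<in> hat_carrier I. \<eta> b = \<xi> b} \<subseteq> U"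
      using H unfolding hatP_def by blast
    then show "\<exists>b. open_ideal I b \<and> {\<eta> \<in> hat_carrier I. \<eta> b = \<xi> b} \<subseteq> \<Union>K" using U(1) by blast
  qed
qed

lemma openin_hat: "fund_system I \<Longrightarrow> openin (hat_top I) U \<longleftrightarrow> hatP I U"
proof -
  assume f: "fund_system I"
  have "hat_top I = topology (hatP I)" unfolding hat_top_def hatP_def by simp
  then show ?thesis using topology_inverse'[OF istop_hat[OF f]] by simp
qed

lemma topspace_hat: assumes f: "fund_system I" shows "topspace (hat_top I) = hat_carrier I"
proof
  show "topspace (hat_top I) \<subseteq> hat_carrier I" unfolding topspace_def using openin_hat[OF f]
    unfolding hatP_def by blast
  have "hatP I (hat_carrier I)" unfolding hatP_def using open_ideal_UNIV by blast
  then show "hat_carrier I \<subseteq> topspace (hat_top I)" using openin_hat[OF f] openin_subset by blast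
qed



definition good_op :: "('b::comm_ring_1 \<Rightarrow> 'b \<Rightarrow> 'b) \<Rightarrow> bool" where
  "good_op f \<longleftrightarrow> (\<forall>b x y u v. is_ideal b \<longrightarrow> u \<in> b \<longrightarrow> v \<in> b \<longrightarrow> f (x + u) (y + v) - f x y \<in> b)"

lemma good_plus: "good_op ((+) :: 'b::comm_ring_1 \<Rightarrow> _)"
  unfolding good_op_def
proof (intro allI impI)
  fix b :: "'b set" and x y u v :: 'b assume "is_ideal b" "u \<in> b" "v \<in> b"
  moreover have "(x + u) + (y + v) - (x + y) = u + v" by simp
  ultimately show "(x + u) + (y + v) - (x + y) \<in> b" using ideal_props(2) by metis
qed

lemma good_minus: "good_op ((-) :: 'b::comm_ring_1 \<Rightarrow> _)"
  unfolding good_op_def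
proof (intro allI impI)
  fix b :: "'b set" and x y u v :: 'b assume "is_ideal b" "u \<in> b" "v \<in> b"
  moreover have "(x + u) - (y + v) - (x - y) = u - v" by simp
  ultimately show "(x + u) - (y + v) - (x - y) \<in> b" using ideal_props(5) by metis
qed

lemma good_times: "good_op ((*) :: 'b::comm_ring_1 \<Rightarrow> _)"
  unfolding good_op_def
proof (intro allI impI)
  fix b :: "'b set" and x y u v :: 'b assume i: "is_ideal b" and u: "u \<in> b" and v: "v \<in> b"
  have "(x + u) * (y + v) - (x * y) = x * v + (u * y + u * v)" by (simp add: algebra_simps)
  moreover have "x * v \<in> b" "u * y \<in> b" "u * v \<in> b" using ideal_props(4,6)[OF i] u v by auto
  ultimately show "(x + u) * (y + v) - (x * y) \<in> b" using ideal_props(2)[OF i] by metis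
qed

lemma hat_op_coset:
  assumes g: "good_op f" and b: "open_ideal I b"
    and x: "\<xi> b = (\<lambda>y. x + y) ` b" and y: "\<eta> b = (\<lambda>z. y + z) ` b"
  shows "hat_op I f \<xi> \<eta> b = (\<lambda>z. f x y + z) ` b"
proof -
  have i: "is_ideal b" using b unfolding open_ideal_def by simp
  have "{z. \<exists>x'\<in>\<xi> b. \<exists>y'\<in>\<eta> b. z - f x' y' \<in> b} = (\<lambda>z. f x y + z) ` b"
  proof (rule set_eqI, rule iffI)
    fix z assume "z \<in> {z. \<exists>x'\<in>\<xi> b. \<exists>y'\<in>\<eta> b. z - f x' y' \<in> b}"
    then obtain u v where uv: "u \<in> b" "v \<in> b" "z - f (x + u) (y + v) \<in> b" using x y by auto
    have "f (x + u) (y + v) - f x y \<in> b" using g uv i unfolding good_op_def by blast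
    then have "(z - f (x + u) (y + v)) + (f (x + u) (y + v) - f x y) \<in> b"
      using ideal_props(2)[OF i] uv(3) by blast
    then have "z - f x y \<in> b" by simp
    then show "z \<in> (\<lambda>z. f x y + z) ` b" using coset_mem[OF i] by blast
  next
    fix z assume "z \<in> (\<lambda>z. f x y + z) ` b"
    then have "z - f x y \<in> b" using coset_mem[OF i] by blast
    moreover have "x \<in> \<xi> b" "y \<in> \<eta> b" using x y self_in_coset[OF i] by auto
    ultimately show "z \<in> {z. \<exists>x'\<in>\<xi> b. \<exists>y'\<in>\<eta> b. z - f x' y' \<in> b}" by blast
  qed
  then show ?thesis unfolding hat_op_def using b by simp
qed

lemma hat_op_carrier:
  assumes g: "good_op f" and xi: "\<xi> \<in> hat_carrier I" and eta: "\<eta> \<in> hat_carrier I"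
  shows "hat_op I f \<xi> \<eta> \<in> hat_carrier I"
  unfolding hat_carrier_def
proof (intro CollectI conjI allI impI)
  fix b assume b: "open_ideal I b"
  obtain x y where "\<xi> b = (\<lambda>z. x + z) ` b" "\<eta> b = (\<lambda>z. y + z) ` b" using hc_ex b xi eta by metis
  then show "\<exists>x. hat_op I f \<xi> \<eta> b = (+) x ` b" using hat_op_coset[OF g b] by blast
next
  fix b assume "\<not> open_ideal I b" then show "hat_op I f \<xi> \<eta> b = {}" unfolding hat_op_def by simp
next
  fix b b' assume bb: "open_ideal I b \<and> open_ideal I b' \<and> b \<subseteq> b'"
  then have b: "open_ideal I b" and b': "open_ideal I b'" and sub: "b \<subseteq> b'" by auto
  have i: "is_ideal b" using b unfolding open_ideal_def by simp
  obtain x y where x: "\<xi> b = (\<lambda>z. x + z) ` b" and y: "\<eta> b = (\<lambda>z. y + z) ` b" using hc_ex b xi eta by metis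
  have "x \<in> \<xi> b" using x self_in_coset[OF i] by simp
  then have xb': "x \<in> \<xi> b'" using hc_mono[OF xi b b' sub] by blast
  have "y \<in> \<eta> b" using y self_in_coset[OF i] by simp
  then have "y \<in> \<eta> b'" using hc_mono[OF eta b b' sub] by blast
  note xb' this
  then have x': "\<xi> b' = (\<lambda>z. x + z) ` b'" and y': "\<eta> b' = (\<lambda>z. y + z) ` b'"
    using hc_coset xi eta b' by metis+
  show "hat_op I f \<xi> \<eta> b \<subseteq> hat_op I f \<xi> \<eta> b'"
    using hat_op_coset[where \<xi>=\<xi> and \<eta>=\<eta>, OF g b x y] hat_op_coset[where \<xi>=\<xi> and \<eta>=\<eta>, OF g b' x' y'] sub by auto
qed

definition Kb :: "(nat \<Rightarrow> 'b::comm_ring_1 set) \<Rightarrow> 'b set \<Rightarrow> ('b set \<Rightarrow> 'b set) set" where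
  "Kb I b = {\<xi> \<in> hat_carrier I. \<xi> b = b}"

lemma K3:
  assumes t: "\<tau> \<in> hat_carrier I" and s: "\<sigma> \<in> hat_carrier I" and b: "open_ideal I b"
  shows "hat_op I (-) \<tau> \<sigma> \<in> Kb I b \<longleftrightarrow> \<tau> b = \<sigma> b"
proof -
  have i: "is_ideal b" using b unfolding open_ideal_def by simp
  obtain x y where x: "\<tau> b = (\<lambda>z. x + z) ` b" and y: "\<sigma> b = (\<lambda>z. y + z) ` b" using hc_ex b t s by metis
  have "hat_op I (-) \<tau> \<sigma> b = (\<lambda>z. (x - y) + z) ` b" using hat_op_coset[where \<xi>=\<tau> and \<eta>=\<sigma>, OF good_minus b x y] .
  then have "hat_op I (-) \<tau> \<sigma> \<in> Kb I b \<longleftrightarrow> x - y \<in> b"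
    unfolding Kb_def using hat_op_carrier[OF good_minus t s] coset_eq_self_iff[OF i] by simp
  also have "\<dots> \<longleftrightarrow> \<tau> b = \<sigma> b" using x y coset_eq_iff[OF i] by simp
  finally show ?thesis .
qed

lemma K4:
  assumes "open_ideal I b" "open_ideal I b'" "b \<subseteq> b'" shows "Kb I b \<subseteq> Kb I b'"
proof
  fix \<xi> assume "\<xi> \<in> Kb I b"
  then have "\<xi> \<in> hat_carrier I" "\<xi> b = hat_zero I b" unfolding Kb_def using hat_zero_app assms by auto
  then have "\<xi> b' = hat_zero I b'" using hc_mono_eq[OF _ hat_zero_in assms] by blast
  then show "\<xi> \<in> Kb I b'" using hat_zero_app assms \<open>\<xi> \<in> hat_carrier I\<close> unfolding Kb_def by auto
qed

lemma K1:
  assumes f: "fund_system I" and b: "open_ideal I b" shows "hat_open_ideal I (Kb I b)"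
  unfolding hat_open_ideal_def hat_ideal_def
proof (intro conjI ballI)
  have i: "is_ideal b" using b unfolding open_ideal_def by simp
  show "Kb I b \<subseteq> hat_carrier I" unfolding Kb_def by auto
  show "hat_zero I \<in> Kb I b" unfolding Kb_def using hat_zero_in hat_zero_app[OF b] by auto
  fix \<xi> \<eta> assume x: "\<xi> \<in> Kb I b" and y: "\<eta> \<in> Kb I b"
  have x0: "\<xi> b = (\<lambda>z. 0 + z) ` b" "\<eta> b = (\<lambda>z. 0 + z) ` b" using x y unfolding Kb_def by auto
  show "hat_op I (+) \<xi> \<eta> \<in> Kb I b" unfolding Kb_def
    using hat_op_carrier[OF good_plus] hat_op_coset[where \<xi>=\<xi> and \<eta>=\<eta>, OF good_plus b x0] x y unfolding Kb_def by auto
  show "hat_op I (-) \<xi> \<eta> \<in> Kb I b" unfolding Kb_def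
    using hat_op_carrier[OF good_minus] hat_op_coset[where \<xi>=\<xi> and \<eta>=\<eta>, OF good_minus b x0] x y unfolding Kb_def by auto
next
  fix \<rho> \<xi> assume r: "\<rho> \<in> hat_carrier I" and x: "\<xi> \<in> Kb I b"
  have i: "is_ideal b" using b unfolding open_ideal_def by simp
  obtain r0 where r0: "\<rho> b = (\<lambda>z. r0 + z) ` b" using hc_ex r b by metis
  have x0: "\<xi> b = (\<lambda>z. 0 + z) ` b" using x unfolding Kb_def by auto
  show "hat_op I (*) \<rho> \<xi> \<in> Kb I b" unfolding Kb_def
    using hat_op_carrier[OF good_times r] hat_op_coset[where \<xi>=\<rho> and \<eta>=\<xi>, OF good_times b r0 x0] x unfolding Kb_def by auto
next
  show "openin (hat_top I) (Kb I b)" unfolding openin_hat[OF f] hatP_def Kb_def using b by auto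
qed

lemma K2:
  assumes f: "fund_system I" and J: "hat_open_ideal I J" shows "\<exists>b. open_ideal I b \<and> Kb I b \<subseteq> J"
proof -
  have "hatP I J" "hat_zero I \<in> J" using J openin_hat[OF f] unfolding hat_open_ideal_def hat_ideal_def by auto
  then obtain b where b: "open_ideal I b" "{\<eta> \<in> hat_carrier I. \<eta> b = hat_zero I b} \<subseteq> J"
    unfolding hatP_def by blast
  then show ?thesis unfolding Kb_def using hat_zero_app[OF b(1)] by auto
qed



definition rpsQ :: "(nat \<Rightarrow> 'b::comm_ring_1 set) \<Rightarrow> (nat \<Rightarrow> ('b set \<Rightarrow> 'b set)) set \<Rightarrow> bool" where
  "rpsQ I U \<longleftrightarrow> U \<subseteq> rps_carrier I \<and>
     (\<forall>\<sigma>\<in>U. \<exists>b. open_ideal I b \<and> {\<tau> \<in> rps_carrier I. \<forall>n. \<tau> n b = \<sigma> n b} \<subseteq> U)"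

lemma rps_in: "\<sigma> \<in> rps_carrier I \<Longrightarrow> \<sigma> n \<in> hat_carrier I"
  unfolding rps_carrier_def by auto

lemma rps_PQ:
  assumes f: "fund_system I"
  shows "(U \<subseteq> rps_carrier I \<and>
     (\<forall>\<sigma>\<in>U. \<exists>J. hat_open_ideal I J \<and>
        {\<tau> \<in> rps_carrier I. \<forall>n. hat_op I (-) (\<tau> n) (\<sigma> n) \<in> J} \<subseteq> U)) \<longleftrightarrow> rpsQ I U"
  unfolding rpsQ_def
proof (intro iffI conjI ballI)
  assume h: "U \<subseteq> rps_carrier I \<and> (\<forall>\<sigma>\<in>U. \<exists>J. hat_open_ideal I J \<and>
        {\<tau> \<in> rps_carrier I. \<forall>n. hat_op I (-) (\<tau> n) (\<sigma> n) \<in> J} \<subseteq> U)"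
  then show "U \<subseteq> rps_carrier I" by simp
  fix \<sigma> assume s: "\<sigma> \<in> U"
  then obtain J where J: "hat_open_ideal I J" "{\<tau> \<in> rps_carrier I. \<forall>n. hat_op I (-) (\<tau> n) (\<sigma> n) \<in> J} \<subseteq> U"
    using h by blast
  obtain b where b: "open_ideal I b" "Kb I b \<subseteq> J" using K2[OF f J(1)] by blast
  have sc: "\<sigma> \<in> rps_carrier I" using s h by auto
  have "{\<tau> \<in> rps_carrier I. \<forall>n. \<tau> n b = \<sigma> n b} \<subseteq> U"
  proof
    fix \<tau> assume t: "\<tau> \<in> {\<tau> \<in> rps_carrier I. \<forall>n. \<tau> n b = \<sigma> n b}"
    then have "\<forall>n. hat_op I (-) (\<tau> n) (\<sigma> n) \<in> J"
      using K3[OF rps_in rps_in[OF sc] b(1)] b(2) by blast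
    then show "\<tau> \<in> U" using J(2) t by blast
  qed
  then show "\<exists>b. open_ideal I b \<and> {\<tau> \<in> rps_carrier I. \<forall>n. \<tau> n b = \<sigma> n b} \<subseteq> U" using b by blast
next
  assume h: "U \<subseteq> rps_carrier I \<and> (\<forall>\<sigma>\<in>U. \<exists>b. open_ideal I b \<and> {\<tau> \<in> rps_carrier I. \<forall>n. \<tau> n b = \<sigma> n b} \<subseteq> U)"
  then show "U \<subseteq> rps_carrier I" by simp
  fix \<sigma> assume s: "\<sigma> \<in> U"
  then obtain b where b: "open_ideal I b" "{\<tau> \<in> rps_carrier I. \<forall>n. \<tau> n b = \<sigma> n b} \<subseteq> U"
    using h by blast
  have sc: "\<sigma> \<in> rps_carrier I" using s h by auto
  have "{\<tau> \<in> rps_carrier I. \<forall>n. hat_op I (-) (\<tau> n) (\<sigma> n) \<in> Kb I b} \<subseteq> U"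
  proof
    fix \<tau> assume t: "\<tau> \<in> {\<tau> \<in> rps_carrier I. \<forall>n. hat_op I (-) (\<tau> n) (\<sigma> n) \<in> Kb I b}"
    then have "\<forall>n. \<tau> n b = \<sigma> n b"
      using K3[OF rps_in rps_in[OF sc] b(1)] by blast
    then show "\<tau> \<in> U" using b(2) t by blast
  qed
  then show "\<exists>J. hat_open_ideal I J \<and> {\<tau> \<in> rps_carrier I. \<forall>n. hat_op I (-) (\<tau> n) (\<sigma> n) \<in> J} \<subseteq> U"
    using K1[OF f b(1)] by blast
qed

lemma istop_rps: assumes f: "fund_system I" shows "istopology (rpsQ I)"
  unfolding istopology_def
proof (intro conjI allI impI)
  fix S T assume S: "rpsQ I S" and T: "rpsQ I T"
  show "rpsQ I (S \<inter> T)" unfolding rpsQ_def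
  proof (intro conjI ballI)
    show "S \<inter> T \<subseteq> rps_carrier I" using S unfolding rpsQ_def by auto
    fix \<sigma> assume x: "\<sigma> \<in> S \<inter> T"
    obtain b1 where b1: "open_ideal I b1" "{\<tau> \<in> rps_carrier I. \<forall>n. \<tau> n b1 = \<sigma> n b1} \<subseteq> S"
      using S x unfolding rpsQ_def by blast
    obtain b2 where b2: "open_ideal I b2" "{\<tau> \<in> rps_carrier I. \<forall>n. \<tau> n b2 = \<sigma> n b2} \<subseteq> T"
      using T x unfolding rpsQ_def by blast
    have b: "open_ideal I (b1 \<inter> b2)" using open_ideal_Int[OF f b1(1) b2(1)] .
    have xc: "\<sigma> \<in> rps_carrier I" using x S unfolding rpsQ_def by auto
    have "{\<tau> \<in> rps_carrier I. \<forall>n. \<tau> n (b1 \<inter> b2) = \<sigma> n (b1 \<inter> b2)} \<subseteq> S \<inter> T"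
    proof
      fix \<tau> assume e: "\<tau> \<in> {\<tau> \<in> rps_carrier I. \<forall>n. \<tau> n (b1 \<inter> b2) = \<sigma> n (b1 \<inter> b2)}"
      then have "\<forall>n. \<tau> n b1 = \<sigma> n b1" "\<forall>n. \<tau> n b2 = \<sigma> n b2"
        using hc_mono_eq[OF rps_in rps_in[OF xc] b b1(1)] hc_mono_eq[OF rps_in rps_in[OF xc] b b2(1)] by auto
      then show "\<tau> \<in> S \<inter> T" using e b1 b2 by auto
    qed
    then show "\<exists>b. open_ideal I b \<and> {\<tau> \<in> rps_carrier I. \<forall>n. \<tau> n b = \<sigma> n b} \<subseteq> S \<inter> T" using b by blast
  qed
next
  fix K assume H: "\<forall>U\<in>K. rpsQ I U"
  show "rpsQ I (\<Union>K)" unfolding rpsQ_def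
  proof (intro conjI ballI)
    show "\<Union>K \<subseteq> rps_carrier I" using H unfolding rpsQ_def by blast
    fix \<sigma> assume "\<sigma> \<in> \<Union>K"
    then obtain U where U: "U \<in> K" "\<sigma> \<in> U" by blast
    then obtain b where "open_ideal I b" "{\<tau> \<in> rps_carrier I. \<forall>n. \<tau> n b = \<sigma> n b} \<subseteq> U"
      using H unfolding rpsQ_def by blast
    then show "\<exists>b. open_ideal I b \<and> {\<tau> \<in> rps_carrier I. \<forall>n. \<tau> n b = \<sigma> n b} \<subseteq> \<Union>K" using U(1) by blast
  qed
qed

lemma openin_rps: assumes f: "fund_system I" shows "openin (rps_top I) U \<longleftrightarrow> rpsQ I U"
proof -
  have "rps_top I = topology (rpsQ I)" unfolding rps_top_def using rps_PQ[OF f] by presburger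
  then show ?thesis using topology_inverse'[OF istop_rps[OF f]] by simp
qed

lemma topspace_rps: assumes f: "fund_system I" shows "topspace (rps_top I) = rps_carrier I"
proof
  show "topspace (rps_top I) \<subseteq> rps_carrier I" unfolding topspace_def using openin_rps[OF f]
    unfolding rpsQ_def by blast
  have "rpsQ I (rps_carrier I)" unfolding rpsQ_def using open_ideal_UNIV by blast
  then show "rps_carrier I \<subseteq> topspace (rps_top I)" using openin_rps[OF f] openin_subset by blast
qed



theorem lemma1p30:
  fixes IA :: "nat \<Rightarrow> 'a::comm_ring_1 set"
    and IB :: "nat \<Rightarrow> 'b::comm_ring_1 set"
    and h :: "nat \<Rightarrow> 'a \<Rightarrow> 'b"
  assumes "fund_system IA"
    and "fund_system IB"
    and "Hausdorff_space (lin_top IB)"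
    and "\<forall>n x y. h n (x + y) = h n x + h n y"
    and "conv_pointwise_zero IB h"
  shows "(\<forall>a. (\<lambda>n. cmap IB (h n a)) \<in> rps_carrier IB)
    \<and> (\<forall>a a'. (\<lambda>n. cmap IB (h n (a + a')))
              = rps_add IB (\<lambda>n. cmap IB (h n a)) (\<lambda>n. cmap IB (h n a')))
    \<and> (continuous_map (lin_top IA) (rps_top IB) (\<lambda>a n. cmap IB (h n a))
        \<longleftrightarrow> conv_continuously_zero IA IB h)"
proof -
  note fA = assms(1) and fB = assms(2) and add = assms(4) and pw = assms(5)
  define s where "s = (\<lambda>a n. cmap IB (h n a))"
  have h0: "h n 0 = 0" for n using add[rule_format, of n 0 0] by simp
  have sapp: "s a n b = (\<lambda>y. h n a + y) ` b" if "open_ideal IB b" for a n b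
    unfolding s_def using cmap_app[OF that] .
  have idl: "is_ideal b" if "open_ideal IB b" for b using that unfolding open_ideal_def by simp
  have P1: "s a \<in> rps_carrier IB" for a
    unfolding rps_carrier_def limitin_def
  proof (intro CollectI conjI allI impI)
    show "s a n \<in> hat_carrier IB" for n unfolding s_def by (rule cmap_in)
    show "hat_zero IB \<in> topspace (hat_top IB)" using topspace_hat[OF fB] hat_zero_in by blast
    fix U assume U: "openin (hat_top IB) U \<and> hat_zero IB \<in> U"
    then obtain b where b: "open_ideal IB b" "{\<eta> \<in> hat_carrier IB. \<eta> b = hat_zero IB b} \<subseteq> U"
      using openin_hat[OF fB] unfolding hatP_def by blast
    obtain n0 where n0: "\<forall>n\<ge>n0. h n a \<in> b" using pw b(1) unfolding conv_pointwise_zero_def by blast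
    have "s a n \<in> U" if "n \<ge> n0" for n
    proof -
      have "s a n b = hat_zero IB b" using sapp[OF b(1)] hat_zero_app[OF b(1)]
          coset_eq_self_iff[OF idl[OF b(1)]] n0 that by simp
      then show ?thesis using b(2) cmap_in unfolding s_def by blast
    qed
    then show "\<forall>\<^sub>F n in sequentially. s a n \<in> U" using eventually_sequentially by blast
  qed
  have P2: "s (a + a') = rps_add IB (s a) (s a')" for a a'
  proof (rule ext, rule ext)
    fix n b
    show "s (a + a') n b = rps_add IB (s a) (s a') n b"
    proof (cases "open_ideal IB b")
      case True
      show ?thesis unfolding rps_add_def
        using hat_op_coset[where \<xi>="s a n" and \<eta>="s a' n", OF good_plus True sapp[OF True] sapp[OF True]]
          sapp[OF True] add by simp
    next
      case False
      then show ?thesis unfolding rps_add_def s_def hat_op_def cmap_def by simp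
    qed
  qed
  define star where "star \<longleftrightarrow> (\<forall>b. open_ideal IB b \<longrightarrow> (\<exists>k. \<forall>x\<in>IA k. \<forall>n. h n x \<in> b))"
  have C1: "continuous_map (lin_top IA) (rps_top IB) s \<Longrightarrow> star"
    unfolding star_def
  proof (intro allI impI)
    fix b assume c: "continuous_map (lin_top IA) (rps_top IB) s" and b: "open_ideal IB b"
    define U where "U = {\<tau> \<in> rps_carrier IB. \<forall>n. \<tau> n b = s 0 n b}"
    have "rpsQ IB U" unfolding rpsQ_def U_def using b by auto
    then have "openin (rps_top IB) U" using openin_rps[OF fB] by simp
    then have "openin (lin_top IA) {x \<in> topspace (lin_top IA). s x \<in> U}"
      using c unfolding continuous_map_def by blast
    moreover have "0 \<in> {x \<in> topspace (lin_top IA). s x \<in> U}"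
      using P1 topspace_lin[OF fA] unfolding U_def by auto
    ultimately obtain k where k: "(\<lambda>y. 0 + y) ` IA k \<subseteq> {x \<in> topspace (lin_top IA). s x \<in> U}"
      using openin_lin[OF fA] by blast
    have "h n x \<in> b" if "x \<in> IA k" for x n
    proof -
      have "s x n b = s 0 n b" using k that unfolding U_def by auto
      then have "(\<lambda>y. h n x + y) ` b = b" using sapp[OF b] h0 by simp
      then show ?thesis using coset_eq_self_iff[OF idl[OF b]] by simp
    qed
    then show "\<exists>k. \<forall>x\<in>IA k. \<forall>n. h n x \<in> b" by blast
  qed
  have C2: "star \<Longrightarrow> continuous_map (lin_top IA) (rps_top IB) s"
    unfolding continuous_map_def
  proof (intro conjI allI impI)
    show "s \<in> topspace (lin_top IA) \<rightarrow> topspace (rps_top IB)" using P1 topspace_rps[OF fB] by simp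
    fix U assume st: star and U: "openin (rps_top IB) U"
    then have Q: "rpsQ IB U" using openin_rps[OF fB] by simp
    show "openin (lin_top IA) {x \<in> topspace (lin_top IA). s x \<in> U}"
      unfolding openin_lin[OF fA]
    proof
      fix a assume a: "a \<in> {x \<in> topspace (lin_top IA). s x \<in> U}"
      then obtain b where b: "open_ideal IB b" "{\<tau> \<in> rps_carrier IB. \<forall>n. \<tau> n b = s a n b} \<subseteq> U"
        using Q unfolding rpsQ_def by blast
      obtain k where k: "\<forall>x\<in>IA k. \<forall>n. h n x \<in> b" using st b(1) unfolding star_def by blast
      have "s (a + x) \<in> U" if "x \<in> IA k" for x
      proof -
        have "s (a + x) n b = s a n b" for n
          using sapp[OF b(1)] add coset_eq_iff[OF idl[OF b(1)], of "h n a + h n x" "h n a"] k that by simp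
        then show ?thesis using b(2) P1 by blast
      qed
      then show "\<exists>k. (+) a ` IA k \<subseteq> {x \<in> topspace (lin_top IA). s x \<in> U}"
        using topspace_lin[OF fA] by blast
    qed
  qed
  have C3: "star \<Longrightarrow> conv_continuously_zero IA IB h"
    unfolding conv_continuously_zero_def
  proof (intro conjI allI impI)
    assume st: star
    fix n
    show "continuous_map (lin_top IA) (lin_top IB) (h n)"
      unfolding continuous_map_def topspace_lin[OF fA] topspace_lin[OF fB]
    proof (intro conjI allI impI)
      show "h n \<in> UNIV \<rightarrow> UNIV" by simp
      fix U assume "openin (lin_top IB) U"
      then have U: "\<forall>x\<in>U. \<exists>k. (\<lambda>y. x + y) ` IB k \<subseteq> U" using openin_lin[OF fB] by simp
      show "openin (lin_top IA) {x \<in> UNIV. h n x \<in> U}"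
        unfolding openin_lin[OF fA]
      proof
        fix a assume "a \<in> {x \<in> UNIV. h n x \<in> U}"
        then obtain k' where k': "(\<lambda>y. h n a + y) ` IB k' \<subseteq> U" using U by blast
        obtain k where k: "\<forall>x\<in>IA k. \<forall>n. h n x \<in> IB k'" using st fund_open_ideal[OF fB] unfolding star_def by blast
        have "h n (a + x) \<in> U" if "x \<in> IA k" for x
        proof -
          have e: "h n (a + x) = h n a + h n x" using add by blast
          have "h n x \<in> IB k'" using k that by blast
          then show ?thesis using k' e by blast
        qed
        then show "\<exists>k. (+) a ` IA k \<subseteq> {x \<in> UNIV. h n x \<in> U}" by blast
      qed
    qed
  next
    fix a b' assume st: star and b': "open_ideal IB b'"
    obtain k where k: "\<forall>x\<in>IA k. \<forall>n. h n x \<in> b'" using st b' unfolding star_def by blast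
    obtain n0 where n0: "\<forall>n\<ge>n0. h n a \<in> b'" using pw b' unfolding conv_pointwise_zero_def by blast
    have "\<forall>x\<in>IA k. \<forall>n\<ge>n0. h n (a + x) \<in> b'"
    proof (intro ballI allI impI)
      fix x n assume x: "x \<in> IA k" and n: "n \<ge> n0"
      have e: "h n (a + x) = h n a + h n x" using add by blast
      show "h n (a + x) \<in> b'" unfolding e using ideal_props(2)[OF idl[OF b']] k n0 x n by blast
    qed
    then show "\<exists>\<aa> n0. open_ideal IA \<aa> \<and> (\<forall>x\<in>\<aa>. \<forall>n\<ge>n0. h n (a + x) \<in> b')"
      using fund_open_ideal[OF fA] by blast
  qed
  have C4: "conv_continuously_zero IA IB h \<Longrightarrow> star"
    unfolding star_def
  proof (intro allI impI)
    fix b assume cc: "conv_continuously_zero IA IB h" and b: "open_ideal IB b"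
    obtain aa n0 where aa: "open_ideal IA aa" "\<forall>x\<in>aa. \<forall>n\<ge>n0. h n (0 + x) \<in> b"
      using cc b unfolding conv_continuously_zero_def by blast
    obtain k0 where k0: "IA k0 \<subseteq> aa" using aa(1) unfolding open_ideal_def by blast
    have bo: "openin (lin_top IB) b" unfolding openin_lin[OF fB]
    proof
      fix y assume y: "y \<in> b"
      obtain kb where kb: "IB kb \<subseteq> b" using b unfolding open_ideal_def by blast
      have "(\<lambda>z. y + z) ` IB kb \<subseteq> b" using kb y ideal_props(2)[OF idl[OF b]] by blast
      then show "\<exists>k. (+) y ` IB k \<subseteq> b" by blast
    qed
    have "\<exists>k. IA k \<subseteq> {x. h n x \<in> b}" if "n < n0" for n
    proof -
      have "continuous_map (lin_top IA) (lin_top IB) (h n)" using cc unfolding conv_continuously_zero_def by blast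
      then have "openin (lin_top IA) {x \<in> topspace (lin_top IA). h n x \<in> b}"
        using bo unfolding continuous_map_def by blast
      moreover have "0 \<in> {x \<in> topspace (lin_top IA). h n x \<in> b}"
        using h0 ideal_props(1)[OF idl[OF b]] topspace_lin[OF fA] by simp
      ultimately obtain k where "(\<lambda>y. 0 + y) ` IA k \<subseteq> {x \<in> topspace (lin_top IA). h n x \<in> b}"
        using openin_lin[OF fA] by blast
      then show ?thesis by auto
    qed
    then obtain k1 where k1: "\<forall>n<n0. IA k1 \<subseteq> {x. h n x \<in> b}"
      using fund_finite[OF fA, of n0 "\<lambda>n. {x. h n x \<in> b}"] by blast
    obtain k where k: "IA k \<subseteq> IA k0 \<inter> IA k1" using fA unfolding fund_system_def by blast
    have "h n x \<in> b" if "x \<in> IA k" for x n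
    proof (cases "n < n0")
      case True then show ?thesis using k1 k that by blast
    next
      case False then show ?thesis using aa(2) k0 k that by auto
    qed
    then show "\<exists>k. \<forall>x\<in>IA k. \<forall>n. h n x \<in> b" by blast
  qed
  have X1: "\<forall>a. s a \<in> rps_carrier IB" using P1 by blast
  have X2: "\<forall>a a'. s (a + a') = rps_add IB (s a) (s a')" using P2 by blast
  have X3: "continuous_map (lin_top IA) (rps_top IB) s \<longleftrightarrow> conv_continuously_zero IA IB h"
    using C1 C2 C3 C4 by blast
  show ?thesis
    apply (intro conjI)
    subgoal using X1 unfolding s_def by assumption
    subgoal using X2 unfolding s_def by assumption
    subgoal using X3 unfolding s_def by assumption
    done
qed

end
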